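(* Let $\Lambda$ be a weight function with polynomial growth and $\rho\in(0,\tfrac1\mu]$. Let $\sigma\in S^0_{\rho,\Lambda}$ and let $F$ be a $C^\infty$ function on the complex plane $\mathbb{C}$ (viewed as $\mathbb{R}^2$). Then $F\circ\sigma\in S^0_{\rho,\Lambda}$.
   Context: A positive function $\Lambda\in C^\infty(\mathbb{R}^n)$ is a weight function with polynomial growth if there are constants $0<\mu_0\le\mu_1$, $0<C_0\le C_1$ with $C_0(1+|\xi|)^{\mu_0}\le\Lambda(\xi)\le C_1(1+|\xi|)^{\mu_1}$ for all $\xi$, and there is a real $\mu\ge\mu_1$ such that for all multi-indices $\alpha,\gamma$ with $\gamma_j\in\{0,1\}$ there is $C_{\alpha,\gamma}>0$ with $|\xi^\gamma(\partial^{\alpha+\gamma}\Lambda)(\xi)|\le C_{\alpha,\gamma}\Lambda(\xi)^{1-|\alpha|/\mu}$. For $m\in\mathbb{R}$ and $\rho\in(0,1/\mu]$, $S^m_{\rho,\Lambda}$ is the set of $\sigma\in C^\infty(\mathbb{R}^n\times\mathbb{R}^n)$ (complex-valued) such that for all multi-indices $\alpha,\beta$ there is $C_{\alpha,\beta}>0$ with $|\partial_x^\alpha\partial_\xi^\beta\sigma(x,\xi)|\le C_{\alpha,\beta}\Lambda(\xi)^{m-\rho|\beta|}$ for all $x,\xi\in\mathbb{R}^n$. *)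

theory Defs
  imports "HOL-Analysis.Analysis"
begin

definition dderiv :: "'a::real_normed_vector \<Rightarrow> ('a \<Rightarrow> 'b::real_normed_vector) \<Rightarrow> 'a \<Rightarrow> 'b" where
  "dderiv v f x = frechet_derivative f (at x) v"

fun dderivs :: "'a::real_normed_vector list \<Rightarrow> ('a \<Rightarrow> 'b::real_normed_vector) \<Rightarrow> 'a \<Rightarrow> 'b" where
  "dderivs [] f = f"
| "dderivs (v # vs) f = dderiv v (dderivs vs f)"

definition smooth :: "('a::euclidean_space \<Rightarrow> 'b::real_normed_vector) \<Rightarrow> bool" where
  "smooth f \<longleftrightarrow> (\<forall>vs. set vs \<subseteq> Basis \<longrightarrow> (\<forall>x. dderivs vs f differentiable (at x)))"

definition multi_list :: "('n::finite \<Rightarrow> nat) \<Rightarrow> 'n list" where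
  "multi_list \<alpha> = (SOME L. \<forall>i. count (mset L) i = \<alpha> i)"

definition mabs :: "('n::finite \<Rightarrow> nat) \<Rightarrow> nat" where
  "mabs \<alpha> = (\<Sum>i\<in>UNIV. \<alpha> i)"

definition pd :: "('n::finite \<Rightarrow> nat) \<Rightarrow> (real^'n \<Rightarrow> 'b::real_normed_vector) \<Rightarrow> real^'n \<Rightarrow> 'b" where
  "pd \<alpha> f = dderivs (map (\<lambda>i. axis i 1) (multi_list \<alpha>)) f"

definition pd_xxi :: "('n::finite \<Rightarrow> nat) \<Rightarrow> ('n \<Rightarrow> nat) \<Rightarrow> ((real^'n) \<times> (real^'n) \<Rightarrow> 'b::real_normed_vector)
    \<Rightarrow> (real^'n) \<times> (real^'n) \<Rightarrow> 'b" where
  "pd_xxi \<alpha> \<beta> f = dderivs (map (\<lambda>i. (axis i 1, 0)) (multi_list \<alpha>) @ map (\<lambda>i. (0, axis i 1)) (multi_list \<beta>)) f"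

definition mpow :: "real^'n \<Rightarrow> ('n::finite \<Rightarrow> nat) \<Rightarrow> real" where
  "mpow \<xi> \<gamma> = (\<Prod>i\<in>UNIV. (\<xi> $ i) ^ (\<gamma> i))"

definition weight_poly_growth :: "(real^'n::finite \<Rightarrow> real) \<Rightarrow> real \<Rightarrow> bool" where
  "weight_poly_growth \<Lambda> \<mu> \<longleftrightarrow>
     smooth \<Lambda> \<and> (\<forall>\<xi>. \<Lambda> \<xi> > 0) \<and>
     (\<exists>\<mu>0 \<mu>1 C0 C1. 0 < \<mu>0 \<and> \<mu>0 \<le> \<mu>1 \<and> 0 < C0 \<and> C0 \<le> C1 \<and> \<mu>1 \<le> \<mu> \<and>
        (\<forall>\<xi>. C0 * (1 + norm \<xi>) powr \<mu>0 \<le> \<Lambda> \<xi> \<and> \<Lambda> \<xi> \<le> C1 * (1 + norm \<xi>) powr \<mu>1)) \<and>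
     (\<forall>\<alpha> \<gamma>. (\<forall>j. \<gamma> j \<le> 1) \<longrightarrow>
        (\<exists>C>0. \<forall>\<xi>. \<bar>mpow \<xi> \<gamma> * pd (\<lambda>i. \<alpha> i + \<gamma> i) \<Lambda> \<xi>\<bar>
                    \<le> C * \<Lambda> \<xi> powr (1 - real (mabs \<alpha>) / \<mu>)))"

definition symbol_class :: "real \<Rightarrow> real \<Rightarrow> (real^'n::finite \<Rightarrow> real) \<Rightarrow> ((real^'n) \<times> (real^'n) \<Rightarrow> complex) set" where
  "symbol_class m \<rho> \<Lambda> = {\<sigma>. smooth \<sigma> \<and>
     (\<forall>\<alpha> \<beta>. \<exists>C>0. \<forall>x \<xi>. norm (pd_xxi \<alpha> \<beta> \<sigma> (x, \<xi>)) \<le> C * \<Lambda> \<xi> powr (m - \<rho> * real (mabs \<beta>)))}"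

end

theory Submission
  imports Defs
begin

lemma dderivs_append: "dderivs (a @ b) f = dderivs a (dderivs b f)"
  by (induction a) auto

lemma smooth_dderivs:
  assumes "smooth g" "set ws \<subseteq> Basis"
  shows "smooth (dderivs ws g)"
  using assms unfolding smooth_def
  by (metis dderivs_append le_sup_iff set_append)

lemma smooth_diff:
  assumes "smooth g" "set ws \<subseteq> Basis"
  shows "dderivs ws g differentiable (at x)"
  using assms unfolding smooth_def by blast

lemma dderiv_has:
  assumes "f differentiable (at x)"
  shows "(f has_derivative (\<lambda>h. dderiv h f x)) (at x)"
  using frechet_derivative_works[of f "at x"] assms unfolding dderiv_def by (simp add: eta_contract_eq)

lemma dderiv_linear:
  assumes "f differentiable (at x)"
  shows "dderiv (c *\<^sub>R u) f x = c *\<^sub>R dderiv u f x"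
  using dderiv_has[OF assms] has_derivative_bounded_linear linear_cmul bounded_linear.linear by blast

lemma line_deriv:
  assumes "f differentiable (at (y + t *\<^sub>R u))"
  shows "((\<lambda>t. f (y + t *\<^sub>R u)) has_vector_derivative dderiv u f (y + t *\<^sub>R u)) (at t)"
proof -
  have 1: "((\<lambda>t. y + t *\<^sub>R u) has_derivative (\<lambda>h. h *\<^sub>R u)) (at t)"
    by (auto intro!: derivative_eq_intros)
  have "((\<lambda>t. f (y + t *\<^sub>R u)) has_derivative (\<lambda>h. dderiv (h *\<^sub>R u) f (y + t *\<^sub>R u))) (at t)"
    using has_derivative_compose[OF 1 dderiv_has[OF assms]] .
  then show ?thesis unfolding has_vector_derivative_def
    using dderiv_linear[OF assms] by simp
qed

lemma mvt_lin:
  fixes f :: "real \<Rightarrow> 'b::real_normed_vector"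
  assumes d: "\<And>r. r \<in> closed_segment 0 s \<Longrightarrow> (f has_vector_derivative f' r) (at r)"
    and b: "\<And>r. r \<in> closed_segment 0 s \<Longrightarrow> norm (f' r - c) \<le> K"
  shows "norm (f s - f 0 - s *\<^sub>R c) \<le> K * \<bar>s\<bar>"
proof -
  have "norm ((f s - s *\<^sub>R c) - (f 0 - 0 *\<^sub>R c)) \<le> K * norm (s - 0)"
  proof (rule differentiable_bound[where S="closed_segment 0 s" and f="\<lambda>r. f r - r *\<^sub>R c"
        and f'="\<lambda>r h. h *\<^sub>R (f' r - c)"])
    fix r assume r: "r \<in> closed_segment 0 s"
    have "((\<lambda>r. f r - r *\<^sub>R c) has_derivative (\<lambda>h. h *\<^sub>R f' r - h *\<^sub>R c)) (at r)"
      using d[OF r] unfolding has_vector_derivative_def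
      by (auto intro!: derivative_eq_intros)
    then show "((\<lambda>r. f r - r *\<^sub>R c) has_derivative (\<lambda>h. h *\<^sub>R (f' r - c))) (at r within closed_segment 0 s)"
      by (simp add: has_derivative_at_withinI scaleR_diff_right)
    have "onorm (\<lambda>h::real. h *\<^sub>R (f' r - c)) = onorm (\<lambda>h::real. h) * norm (f' r - c)"
      by (rule onorm_scaleR_left) (rule bounded_linear_ident)
    also have "\<dots> = norm (f' r - c)" by (simp add: onorm_id)
    finally show "onorm (\<lambda>h::real. h *\<^sub>R (f' r - c)) \<le> K" using b[OF r] by simp
  qed auto
  then show ?thesis by (simp add: algebra_simps)
qed


lemma schwarz_est:
  fixes g :: "'a::real_normed_vector \<Rightarrow> 'b::real_normed_vector"
  assumes dg: "\<And>y. g differentiable (at y)" and du: "\<And>y. dderiv u g differentiable (at y)"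
    and cont: "continuous (at x) (dderiv v (dderiv u g))" and e: "e > 0"
  shows "\<exists>d>0. \<forall>s t. \<bar>s\<bar> < d \<longrightarrow> \<bar>t\<bar> < d \<longrightarrow>
    norm (g (x + s *\<^sub>R u + t *\<^sub>R v) - g (x + s *\<^sub>R u) - g (x + t *\<^sub>R v) + g x
      - (s * t) *\<^sub>R dderiv v (dderiv u g) x) \<le> e * \<bar>s\<bar> * \<bar>t\<bar>"
proof -
  define D where "D = dderiv v (dderiv u g)"
  define Du where "Du = dderiv u g"
  obtain d' where d': "d' > 0" "\<And>y. dist y x < d' \<Longrightarrow> dist (D y) (D x) < e"
    using cont e unfolding continuous_at_eps_delta D_def by blast
  define d where "d = d' / (norm u + norm v + 1)"
  have dpos: "d > 0" using d'(1) unfolding d_def by (intro divide_pos_pos) (auto intro: add_nonneg_pos)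
  have near: "norm (r *\<^sub>R u + \<tau> *\<^sub>R v) < d'" if "\<bar>r\<bar> < d" "\<bar>\<tau>\<bar> < d" for r \<tau>
  proof -
    have "norm (r *\<^sub>R u + \<tau> *\<^sub>R v) \<le> \<bar>r\<bar> * norm u + \<bar>\<tau>\<bar> * norm v"
      by (metis norm_scaleR norm_triangle_le order_refl add_mono)
    also have "\<dots> \<le> d * norm u + d * norm v"
      using that by (intro add_mono mult_right_mono) auto
    also have "\<dots> < d * (norm u + norm v + 1)" using dpos by (simp add: algebra_simps)
    also have "\<dots> = d'" unfolding d_def by (simp add: add_nonneg_pos order.strict_implies_not_eq[symmetric] add_nonneg_nonneg)
    finally show ?thesis .
  qed
  have seg: "\<bar>r\<bar> \<le> \<bar>s\<bar>" if "r \<in> closed_segment 0 s" for r s :: real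
    using that by (auto simp: closed_segment_eq_real_ivl split: if_splits)
  show ?thesis
  proof (intro exI[of _ d] conjI allI impI dpos)
    fix s t :: real assume s: "\<bar>s\<bar> < d" and t: "\<bar>t\<bar> < d"
    have inner: "norm (Du (x + r *\<^sub>R u + t *\<^sub>R v) - Du (x + r *\<^sub>R u) - t *\<^sub>R D x) \<le> e * \<bar>t\<bar>"
      if r: "\<bar>r\<bar> < d" for r
    proof -
      have "norm ((\<lambda>\<tau>. Du ((x + r *\<^sub>R u) + \<tau> *\<^sub>R v)) t - (\<lambda>\<tau>. Du ((x + r *\<^sub>R u) + \<tau> *\<^sub>R v)) 0
           - t *\<^sub>R D x) \<le> e * \<bar>t\<bar>"
      proof (rule mvt_lin)
        fix \<tau> assume "\<tau> \<in> closed_segment 0 t"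
        then have \<tau>: "\<bar>\<tau>\<bar> < d" using seg t by fastforce
        show "((\<lambda>\<tau>. Du ((x + r *\<^sub>R u) + \<tau> *\<^sub>R v)) has_vector_derivative D ((x + r *\<^sub>R u) + \<tau> *\<^sub>R v)) (at \<tau>)"
          unfolding D_def Du_def by (rule line_deriv) (rule du)
        have "dist ((x + r *\<^sub>R u) + \<tau> *\<^sub>R v) x < d'"
          using near[OF r \<tau>] by (simp add: dist_norm)
        then show "norm (D ((x + r *\<^sub>R u) + \<tau> *\<^sub>R v) - D x) \<le> e"
          using d'(2) by (simp add: dist_norm less_imp_le)
      qed
      then show ?thesis by simp
    qed
    have "norm ((\<lambda>r. g ((x + t *\<^sub>R v) + r *\<^sub>R u) - g (x + r *\<^sub>R u)) s
          - (\<lambda>r. g ((x + t *\<^sub>R v) + r *\<^sub>R u) - g (x + r *\<^sub>R u)) 0 - s *\<^sub>R (t *\<^sub>R D x)) \<le> (e * \<bar>t\<bar>) * \<bar>s\<bar>"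
    proof (rule mvt_lin)
      fix r assume "r \<in> closed_segment 0 s"
      then have r: "\<bar>r\<bar> < d" using seg s by fastforce
      show "((\<lambda>r. g ((x + t *\<^sub>R v) + r *\<^sub>R u) - g (x + r *\<^sub>R u)) has_vector_derivative
          Du ((x + t *\<^sub>R v) + r *\<^sub>R u) - Du (x + r *\<^sub>R u)) (at r)"
        unfolding Du_def
        by (intro has_vector_derivative_diff line_deriv dg)
      show "norm (Du ((x + t *\<^sub>R v) + r *\<^sub>R u) - Du (x + r *\<^sub>R u) - t *\<^sub>R D x) \<le> e * \<bar>t\<bar>"
        using inner[OF r] by (simp add: algebra_simps)
    qed
    then show "norm (g (x + s *\<^sub>R u + t *\<^sub>R v) - g (x + s *\<^sub>R u) - g (x + t *\<^sub>R v) + g x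
      - (s * t) *\<^sub>R dderiv v (dderiv u g) x) \<le> e * \<bar>s\<bar> * \<bar>t\<bar>"
      unfolding D_def[symmetric] by (simp add: algebra_simps)
  qed
qed


lemma schwarz:
  fixes g :: "'a::real_normed_vector \<Rightarrow> 'b::real_normed_vector"
  assumes dg: "\<And>y. g differentiable (at y)" and du: "\<And>y. dderiv u g differentiable (at y)"
    and dv: "\<And>y. dderiv v g differentiable (at y)"
    and c1: "continuous (at x) (dderiv v (dderiv u g))"
    and c2: "continuous (at x) (dderiv u (dderiv v g))"
  shows "dderiv v (dderiv u g) x = dderiv u (dderiv v g) x"
proof (rule ccontr)
  define A where "A = dderiv v (dderiv u g) x"
  define B where "B = dderiv u (dderiv v g) x"
  assume "\<not> ?thesis"
  then have "A \<noteq> B" by (simp add: A_def B_def)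
  define e where "e = norm (A - B) / 4"
  have e: "e > 0" using \<open>A \<noteq> B\<close> by (simp add: e_def)
  obtain d1 where d1: "d1 > 0" "\<forall>s t. \<bar>s\<bar> < d1 \<longrightarrow> \<bar>t\<bar> < d1 \<longrightarrow>
    norm (g (x + s *\<^sub>R u + t *\<^sub>R v) - g (x + s *\<^sub>R u) - g (x + t *\<^sub>R v) + g x
      - (s * t) *\<^sub>R A) \<le> e * \<bar>s\<bar> * \<bar>t\<bar>"
    using schwarz_est[OF dg du c1 e] unfolding A_def by blast
  obtain d2 where d2: "d2 > 0" "\<forall>s t. \<bar>s\<bar> < d2 \<longrightarrow> \<bar>t\<bar> < d2 \<longrightarrow>
    norm (g (x + s *\<^sub>R v + t *\<^sub>R u) - g (x + s *\<^sub>R v) - g (x + t *\<^sub>R u) + g x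
      - (s * t) *\<^sub>R B) \<le> e * \<bar>s\<bar> * \<bar>t\<bar>"
    using schwarz_est[OF dg dv c2 e] unfolding B_def by blast
  define s where "s = min d1 d2 / 2"
  have s: "s > 0" "\<bar>s\<bar> < d1" "\<bar>s\<bar> < d2" using d1 d2 by (auto simp: s_def)
  define H where "H = g (x + s *\<^sub>R u + s *\<^sub>R v) - g (x + s *\<^sub>R u) - g (x + s *\<^sub>R v) + g x"
  have h1: "norm (H - (s * s) *\<^sub>R A) \<le> e * s * s"
    using d1(2)[rule_format, of s s] s unfolding H_def by simp
  have "norm (g (x + s *\<^sub>R v + s *\<^sub>R u) - g (x + s *\<^sub>R v) - g (x + s *\<^sub>R u) + g x
      - (s * s) *\<^sub>R B) \<le> e * s * s"
    using d2(2)[rule_format, of s s] s by simp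
  then have h2: "norm (H - (s * s) *\<^sub>R B) \<le> e * s * s"
    unfolding H_def by (simp add: algebra_simps)
  have "norm ((s * s) *\<^sub>R (A - B)) \<le> norm (H - (s * s) *\<^sub>R A) + norm (H - (s * s) *\<^sub>R B)"
  proof -
    have "(s * s) *\<^sub>R (A - B) = (H - (s * s) *\<^sub>R B) - (H - (s * s) *\<^sub>R A)"
      by (simp add: algebra_simps)
    then show ?thesis by (metis add.commute norm_triangle_ineq4)
  qed
  also have "\<dots> \<le> 2 * e * (s * s)" using h1 h2 by simp
  finally have "(s * s) * norm (A - B) \<le> (s * s) * (2 * e)" using s by (simp add: mult.commute mult.left_commute)
  then have "norm (A - B) \<le> 2 * e" using s by (metis mult_le_cancel_left_pos mult_pos_pos)
  then show False using e unfolding e_def by simp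
qed


lemma smooth_swap:
  assumes "smooth g" "u \<in> Basis" "v \<in> Basis"
  shows "dderiv v (dderiv u g) = dderiv u (dderiv v g)"
proof (rule ext, rule schwarz)
  fix x y
  show "g differentiable (at y)" using smooth_diff[OF assms(1), of "[]"] by simp
  show "dderiv u g differentiable (at y)" using smooth_diff[OF assms(1), of "[u]"] assms by simp
  show "dderiv v g differentiable (at y)" using smooth_diff[OF assms(1), of "[v]"] assms by simp
  show "continuous (at x) (dderiv v (dderiv u g))"
    using differentiable_imp_continuous_within smooth_diff[OF assms(1), of "[v,u]"] assms by force
  show "continuous (at x) (dderiv u (dderiv v g))"
    using differentiable_imp_continuous_within smooth_diff[OF assms(1), of "[u,v]"] assms by force
qed

lemma move_front:
  assumes "smooth h" "set p \<subseteq> Basis" "a \<in> Basis"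
  shows "dderivs (p @ [a]) h = dderivs (a # p) h"
  using assms(2)
proof (induction p)
  case Nil then show ?case by simp
next
  case (Cons b p)
  have "dderivs ((b # p) @ [a]) h = dderiv b (dderivs (a # p) h)" using Cons by simp
  also have "\<dots> = dderiv b (dderiv a (dderivs p h))" by simp
  also have "\<dots> = dderiv a (dderiv b (dderivs p h))"
    using smooth_swap[OF smooth_dderivs[OF assms(1)], of p a b] Cons assms by simp
  finally show ?case by simp
qed

lemma perm_dderivs:
  assumes "smooth g" "set ws \<subseteq> Basis" "mset ws = mset ws'"
  shows "dderivs ws g = dderivs ws' g"
  using assms(2,3)
proof (induction ws arbitrary: ws')
  case Nil then show ?case by simp
next
  case (Cons a rest)
  have "a \<in> set ws'" using Cons.prems(2) by (metis list.set_intros(1) set_mset_mset)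
  then obtain p q where ws': "ws' = p @ a # q" by (meson split_list)
  have ms: "mset rest = mset (p @ q)" using Cons.prems(2) ws' by simp
  have sb: "set ws' \<subseteq> Basis" using Cons.prems by (metis mset_eq_setD)
  have "dderivs ws' g = dderivs (p @ [a]) (dderivs q g)"
    unfolding ws' dderivs_append[symmetric] by simp
  also have "\<dots> = dderivs (a # p) (dderivs q g)"
    using move_front[OF smooth_dderivs[OF assms(1)]] sb ws' by simp
  also have "\<dots> = dderiv a (dderivs (p @ q) g)" by (simp add: dderivs_append)
  also have "\<dots> = dderiv a (dderivs rest g)" using Cons.IH[of "p @ q"] Cons.prems ms by simp
  finally show ?case by simp
qed


lemma count_multi_list: "count (mset (multi_list (\<alpha> :: 'n::finite \<Rightarrow> nat))) i = \<alpha> i"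
proof -
  have "\<exists>L. \<forall>i. count (mset L) i = \<alpha> i"
  proof -
    obtain L where L: "mset L = Abs_multiset \<alpha>" using ex_mset by blast
    have c: "count (Abs_multiset \<alpha>) = \<alpha>" by (rule count_Abs_multiset) simp
    show ?thesis using L c by (intro exI[of _ L]) simp
  qed
  then show ?thesis unfolding multi_list_def by (rule someI_ex[where P="\<lambda>L. \<forall>i. count (mset L) i = \<alpha> i", THEN spec])
qed

lemma mset_multi_list_upd: "mset (multi_list (\<alpha>(i := Suc (\<alpha> i)))) = add_mset i (mset (multi_list \<alpha>))"
  by (rule multiset_eqI) (simp add: count_multi_list)

lemma multi_list_zero: "multi_list (\<lambda>_. 0) = []"
proof -
  have "mset (multi_list (\<lambda>_. 0::nat)) = {#}" by (rule multiset_eqI) (simp add: count_multi_list)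
  then show ?thesis by simp
qed

lemma size_count_sum: "size (M :: 'n::finite multiset) = (\<Sum>i\<in>UNIV. count M i)"
proof (induction M)
  case empty then show ?case by simp
next
  case (add x M)
  have "(\<Sum>i\<in>UNIV. count (add_mset x M) i) = (\<Sum>i\<in>UNIV. count M i + (if i = x then 1 else 0))"
    by (rule sum.cong) auto
  also have "\<dots> = (\<Sum>i\<in>UNIV. count M i) + 1" by (simp add: sum.distrib)
  finally show ?case using add by simp
qed

lemma length_multi_list: "length (multi_list \<alpha>) = mabs \<alpha>"
  by (simp only: size_mset[symmetric] size_count_sum count_multi_list mabs_def)

lemma mabs_upd: "mabs (\<beta>(i := Suc (\<beta> i))) = Suc (mabs \<beta>)"
proof -
  have "mabs (\<beta>(i := Suc (\<beta> i))) = (\<Sum>j\<in>UNIV. \<beta> j + (if j = i then 1 else 0))"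
    unfolding mabs_def by (rule sum.cong) auto
  then show ?thesis by (simp add: sum.distrib mabs_def)
qed

definition lst :: "('n::finite \<Rightarrow> nat) \<Rightarrow> ('n \<Rightarrow> nat) \<Rightarrow> ((real^'n) \<times> (real^'n)) list" where
  "lst \<alpha> \<beta> = map (\<lambda>i. (axis i 1, 0)) (multi_list \<alpha>) @ map (\<lambda>i. (0, axis i 1)) (multi_list \<beta>)"

lemma pd_xxi_lst: "pd_xxi \<alpha> \<beta> f = dderivs (lst \<alpha> \<beta>) f"
  unfolding pd_xxi_def lst_def ..

lemma axis_basis1: "((axis i 1, 0) :: (real^'n::finite) \<times> (real^'n)) \<in> Basis"
  by (auto simp: Basis_prod_def Basis_vec_def)

lemma axis_basis2: "((0, axis i 1) :: (real^'n::finite) \<times> (real^'n)) \<in> Basis"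
  by (auto simp: Basis_prod_def Basis_vec_def)

lemma lst_basis: "set (lst \<alpha> \<beta>) \<subseteq> Basis"
  unfolding lst_def using axis_basis1 axis_basis2 by auto

lemma basis_cases:
  assumes "(v :: (real^'n::finite) \<times> (real^'n)) \<in> Basis"
  shows "(\<exists>i. v = (axis i 1, 0)) \<or> (\<exists>i. v = (0, axis i 1))"
  using assms by (auto simp: Basis_prod_def Basis_vec_def)

definition inc :: "(real^'n::finite) \<times> (real^'n) \<Rightarrow> nat" where
  "inc v = (if fst v = 0 then 1 else 0)"

lemma pd_xxi_deriv:
  fixes \<sigma> :: "(real^'n::finite) \<times> (real^'n) \<Rightarrow> 'b::real_normed_vector"
  assumes "smooth \<sigma>" "v \<in> Basis"
  shows "\<exists>\<alpha>' \<beta>'. mabs \<beta>' = mabs \<beta> + inc v \<and> dderiv v (pd_xxi \<alpha> \<beta> \<sigma>) = pd_xxi \<alpha>' \<beta>' \<sigma>"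
  using basis_cases[OF assms(2)]
proof
  assume "\<exists>i. v = (axis i 1, 0)"
  then obtain i where v: "v = (axis i 1, 0)" by blast
  have "dderiv v (pd_xxi \<alpha> \<beta> \<sigma>) = dderivs (v # lst \<alpha> \<beta>) \<sigma>" by (simp add: pd_xxi_lst)
  also have "\<dots> = dderivs (lst (\<alpha>(i := Suc (\<alpha> i))) \<beta>) \<sigma>"
    by (rule perm_dderivs[OF assms(1)]) (auto simp: lst_def v mset_multi_list_upd intro: axis_basis1 axis_basis2)
  finally show ?thesis
    by (intro exI[of _ "\<alpha>(i := Suc (\<alpha> i))"] exI[of _ \<beta>]) (simp add: pd_xxi_lst inc_def v axis_eq_0_iff)
next
  assume "\<exists>i. v = (0, axis i 1)"
  then obtain i where v: "v = (0, axis i 1)" by blast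
  have "dderiv v (pd_xxi \<alpha> \<beta> \<sigma>) = dderivs (v # lst \<alpha> \<beta>) \<sigma>" by (simp add: pd_xxi_lst)
  also have "\<dots> = dderivs (lst \<alpha> (\<beta>(i := Suc (\<beta> i)))) \<sigma>"
    by (rule perm_dderivs[OF assms(1)]) (auto simp: lst_def v mset_multi_list_upd intro: axis_basis1 axis_basis2)
  finally show ?thesis
    by (intro exI[of _ \<alpha>] exI[of _ "\<beta>(i := Suc (\<beta> i))"]) (simp add: pd_xxi_lst inc_def v mabs_upd)
qed

lemma pd_xxi_zero: "pd_xxi (\<lambda>_. 0) (\<lambda>_. 0) f = f"
  by (simp add: pd_xxi_def multi_list_zero)

lemma mabs_zero: "mabs (\<lambda>_. 0) = 0" by (simp add: mabs_def)


inductive PP :: "(complex \<Rightarrow> complex) \<Rightarrow> ((real^'n::finite) \<times> (real^'n) \<Rightarrow> complex) \<Rightarrow> nat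
    \<Rightarrow> ((real^'n) \<times> (real^'n) \<Rightarrow> complex) \<Rightarrow> bool" for F \<sigma> where
  atF: "set us \<subseteq> Basis \<Longrightarrow> PP F \<sigma> 0 (\<lambda>z. dderivs us F (\<sigma> z))"
| atS: "PP F \<sigma> (mabs \<beta>) (pd_xxi \<alpha> \<beta> \<sigma>)"
| re: "PP F \<sigma> m h \<Longrightarrow> PP F \<sigma> m (\<lambda>z. complex_of_real (Re (h z)))"
| im: "PP F \<sigma> m h \<Longrightarrow> PP F \<sigma> m (\<lambda>z. complex_of_real (Im (h z)))"
| mul: "PP F \<sigma> m1 h1 \<Longrightarrow> PP F \<sigma> m2 h2 \<Longrightarrow> PP F \<sigma> (m1 + m2) (\<lambda>z. h1 z * h2 z)"
| add: "PP F \<sigma> m h1 \<Longrightarrow> PP F \<sigma> m h2 \<Longrightarrow> PP F \<sigma> m (\<lambda>z. h1 z + h2 z)"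

lemma PP_eq: "PP F \<sigma> m h \<Longrightarrow> m = m' \<Longrightarrow> h = h' \<Longrightarrow> PP F \<sigma> m' h'" by simp

lemma complex_lin:
  fixes G :: "complex \<Rightarrow> complex"
  assumes "G differentiable (at w)"
  shows "dderiv c G w = of_real (Re c) * dderiv 1 G w + of_real (Im c) * dderiv \<i> G w"
proof -
  have bl: "linear (\<lambda>h. dderiv h G w)"
    using dderiv_has[OF assms] has_derivative_linear by blast
  have "c = Re c *\<^sub>R 1 + Im c *\<^sub>R \<i>" by (simp add: complex_eq_iff)
  then have "dderiv c G w = dderiv (Re c *\<^sub>R 1 + Im c *\<^sub>R \<i>) G w" by simp
  also have "\<dots> = Re c *\<^sub>R dderiv 1 G w + Im c *\<^sub>R dderiv \<i> G w"
    using linear_add[OF bl] linear_cmul[OF bl] by simp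
  finally show ?thesis by (simp add: scaleR_conv_of_real)
qed

lemma dderiv_eq: "(h has_derivative D) (at z) \<Longrightarrow> dderiv v h z = D v"
  unfolding dderiv_def using frechet_derivative_at by metis

lemma deriv_PP:
  assumes sF: "smooth F" and ss: "smooth \<sigma>"
  shows "PP F \<sigma> m h \<Longrightarrow> \<exists>Dh. (\<forall>z. (h has_derivative Dh z) (at z)) \<and> (\<forall>v\<in>Basis. PP F \<sigma> (m + inc v) (\<lambda>z. Dh z v))"
proof (induction rule: PP.induct)
  case (atF us)
  define G where "G = dderivs us F"
  have dG: "\<And>w. G differentiable (at w)" unfolding G_def using smooth_diff[OF sF atF] .
  have ds: "\<And>z. \<sigma> differentiable (at z)" using smooth_diff[OF ss, of "[]"] by simp
  show ?case
  proof (intro exI[of _ "\<lambda>z d. dderiv (dderiv d \<sigma> z) G (\<sigma> z)"] conjI allI ballI)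
    fix z
    show "((\<lambda>z. dderivs us F (\<sigma> z)) has_derivative (\<lambda>d. dderiv (dderiv d \<sigma> z) G (\<sigma> z))) (at z)"
      using has_derivative_compose[OF dderiv_has[OF ds] dderiv_has[OF dG]] unfolding G_def .
  next
    fix v :: "(real^'a) \<times> (real^'a)" assume v: "v \<in> Basis"
    obtain \<alpha>' \<beta>' where ab: "mabs \<beta>' = inc v" and S: "dderiv v \<sigma> = pd_xxi \<alpha>' \<beta>' \<sigma>"
      using pd_xxi_deriv[OF ss v, of "\<lambda>_. 0" "\<lambda>_. 0"] by (auto simp: mabs_zero pd_xxi_zero)
    have b1: "set (1 # us) \<subseteq> Basis" "set (\<i> # us) \<subseteq> Basis" using atF by (auto simp: Basis_complex_def)
    have "PP F \<sigma> (mabs \<beta>' + 0) (\<lambda>z. complex_of_real (Re (pd_xxi \<alpha>' \<beta>' \<sigma> z)) * dderivs (1 # us) F (\<sigma> z)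
        + complex_of_real (Im (pd_xxi \<alpha>' \<beta>' \<sigma> z)) * dderivs (\<i> # us) F (\<sigma> z))"
      by (intro PP.add PP.mul PP.re PP.im PP.atS PP.atF b1)
    then show "PP F \<sigma> (0 + inc v) (\<lambda>z. dderiv (dderiv v \<sigma> z) G (\<sigma> z))"
    proof (rule PP_eq)
      show "mabs \<beta>' + 0 = 0 + inc v" using ab by simp
      have cl: "\<And>z. dderiv (dderiv v \<sigma> z) G (\<sigma> z) = of_real (Re (dderiv v \<sigma> z)) * dderiv 1 G (\<sigma> z)
          + of_real (Im (dderiv v \<sigma> z)) * dderiv \<i> G (\<sigma> z)"
        by (rule complex_lin[OF dG])
      show "(\<lambda>z. complex_of_real (Re (pd_xxi \<alpha>' \<beta>' \<sigma> z)) * dderivs (1 # us) F (\<sigma> z)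
        + complex_of_real (Im (pd_xxi \<alpha>' \<beta>' \<sigma> z)) * dderivs (\<i> # us) F (\<sigma> z))
        = (\<lambda>z. dderiv (dderiv v \<sigma> z) G (\<sigma> z))"
        unfolding cl by (simp add: S G_def)
    qed
  qed
next
  case (atS \<beta> \<alpha>)
  have d: "\<And>z. pd_xxi \<alpha> \<beta> \<sigma> differentiable (at z)"
    unfolding pd_xxi_lst by (rule smooth_diff[OF ss lst_basis])
  show ?case
  proof (intro exI[of _ "\<lambda>z d. dderiv d (pd_xxi \<alpha> \<beta> \<sigma>) z"] conjI allI ballI)
    fix z show "(pd_xxi \<alpha> \<beta> \<sigma> has_derivative (\<lambda>d. dderiv d (pd_xxi \<alpha> \<beta> \<sigma>) z)) (at z)"
      by (rule dderiv_has[OF d])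
  next
    fix v :: "(real^'a) \<times> (real^'a)" assume v: "v \<in> Basis"
    obtain \<alpha>' \<beta>' where ab: "mabs \<beta>' = mabs \<beta> + inc v" "dderiv v (pd_xxi \<alpha> \<beta> \<sigma>) = pd_xxi \<alpha>' \<beta>' \<sigma>"
      using pd_xxi_deriv[OF ss v] by blast
    show "PP F \<sigma> (mabs \<beta> + inc v) (\<lambda>z. dderiv v (pd_xxi \<alpha> \<beta> \<sigma>) z)"
      using PP.atS[of F \<sigma> \<beta>' \<alpha>'] ab by (simp add: eta_contract_eq)
  qed
next
  case (re m h)
  then obtain Dh where Dh: "\<forall>z. (h has_derivative Dh z) (at z)" "\<forall>v\<in>Basis. PP F \<sigma> (m + inc v) (\<lambda>z. Dh z v)"
    by blast
  have bl: "bounded_linear (\<lambda>c. complex_of_real (Re c))"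
    by (rule bounded_linear_compose[OF bounded_linear_of_real bounded_linear_Re])
  show ?case
    by (intro exI[of _ "\<lambda>z d. complex_of_real (Re (Dh z d))"] conjI allI ballI
        bounded_linear.has_derivative[OF bl] PP.re) (use Dh in auto)
next
  case (im m h)
  then obtain Dh where Dh: "\<forall>z. (h has_derivative Dh z) (at z)" "\<forall>v\<in>Basis. PP F \<sigma> (m + inc v) (\<lambda>z. Dh z v)"
    by blast
  have bl: "bounded_linear (\<lambda>c. complex_of_real (Im c))"
    by (rule bounded_linear_compose[OF bounded_linear_of_real bounded_linear_Im])
  show ?case
    by (intro exI[of _ "\<lambda>z d. complex_of_real (Im (Dh z d))"] conjI allI ballI
        bounded_linear.has_derivative[OF bl] PP.im) (use Dh in auto)
next
  case (mul m1 h1 m2 h2)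
  obtain D1 where D1: "\<forall>z. (h1 has_derivative D1 z) (at z)" "\<forall>v\<in>Basis. PP F \<sigma> (m1 + inc v) (\<lambda>z. D1 z v)"
    using mul.IH(1) by blast
  obtain D2 where D2: "\<forall>z. (h2 has_derivative D2 z) (at z)" "\<forall>v\<in>Basis. PP F \<sigma> (m2 + inc v) (\<lambda>z. D2 z v)"
    using mul.IH(2) by blast
  show ?case
  proof (intro exI[of _ "\<lambda>z d. h1 z * D2 z d + D1 z d * h2 z"] conjI allI ballI)
    fix z show "((\<lambda>z. h1 z * h2 z) has_derivative (\<lambda>d. h1 z * D2 z d + D1 z d * h2 z)) (at z)"
      using has_derivative_mult[OF D1(1)[rule_format] D2(1)[rule_format]] by simp
  next
    fix v :: "(real^'a) \<times> (real^'a)" assume v: "v \<in> Basis"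
    have e1: "m1 + (m2 + inc v) = m1 + m2 + inc v" by simp
    have e2: "(m1 + inc v) + m2 = m1 + m2 + inc v" by simp
    show "PP F \<sigma> (m1 + m2 + inc v) (\<lambda>z. h1 z * D2 z v + D1 z v * h2 z)"
      by (rule PP.add[OF PP_eq[OF PP.mul[OF mul.hyps(1) D2(2)[rule_format, OF v]] e1 refl]
          PP_eq[OF PP.mul[OF D1(2)[rule_format, OF v] mul.hyps(2)] e2 refl]])
  qed
next
  case (add m h1 h2)
  obtain D1 where D1: "\<forall>z. (h1 has_derivative D1 z) (at z)" "\<forall>v\<in>Basis. PP F \<sigma> (m + inc v) (\<lambda>z. D1 z v)"
    using add.IH(1) by blast
  obtain D2 where D2: "\<forall>z. (h2 has_derivative D2 z) (at z)" "\<forall>v\<in>Basis. PP F \<sigma> (m + inc v) (\<lambda>z. D2 z v)"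
    using add.IH(2) by blast
  show ?case
    by (intro exI[of _ "\<lambda>z d. D1 z d + D2 z d"] conjI allI ballI has_derivative_add PP.add)
      (use D1 D2 in auto)
qed


lemma dderivs_PP:
  assumes sF: "smooth F" and ss: "smooth \<sigma>" and P: "PP F \<sigma> m h"
  shows "set vs \<subseteq> Basis \<Longrightarrow> PP F \<sigma> (m + sum_list (map inc vs)) (dderivs vs h)"
proof (induction vs)
  case Nil then show ?case using P by simp
next
  case (Cons v vs)
  then have IH: "PP F \<sigma> (m + sum_list (map inc vs)) (dderivs vs h)" and v: "v \<in> Basis" by auto
  obtain Dh where Dh: "\<forall>z. (dderivs vs h has_derivative Dh z) (at z)"
    "\<forall>v\<in>Basis. PP F \<sigma> (m + sum_list (map inc vs) + inc v) (\<lambda>z. Dh z v)"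
    using deriv_PP[OF sF ss IH] by blast
  have "dderiv v (dderivs vs h) = (\<lambda>z. Dh z v)"
    using Dh(1) dderiv_eq by blast
  then show ?case using Dh(2) v by (simp add: add.commute add.left_commute)
qed

lemma PP_diff:
  assumes sF: "smooth F" and ss: "smooth \<sigma>" and P: "PP F \<sigma> m h"
  shows "h differentiable (at z)"
  using deriv_PP[OF sF ss P] differentiableI by blast

lemma bound_PP:
  fixes \<Lambda> :: "real^'n::finite \<Rightarrow> real"
  assumes sF: "smooth F" and sym: "\<sigma> \<in> symbol_class 0 \<rho> \<Lambda>" and pos: "\<forall>\<xi>. \<Lambda> \<xi> > 0"
  shows "PP F \<sigma> m h \<Longrightarrow> \<exists>C>0. \<forall>x \<xi>. norm (h (x, \<xi>)) \<le> C * \<Lambda> \<xi> powr (- \<rho> * real m)"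
proof (induction rule: PP.induct)
  case (atF us)
  obtain R where R: "\<forall>x \<xi>. norm (pd_xxi (\<lambda>_. 0) (\<lambda>_. 0) \<sigma> (x, \<xi>)) \<le> R * \<Lambda> \<xi> powr (0 - \<rho> * real (mabs (\<lambda>_::'n. 0::nat)))"
    using sym unfolding symbol_class_def by blast
  have Rb: "\<sigma> z \<in> cball 0 R" for z
  proof (cases z)
    case (Pair a b)
    have "norm (\<sigma> (a, b)) \<le> R * (if \<Lambda> b = 0 then 0 else 1)" using R by (simp add: pd_xxi_zero mabs_zero)
    then show ?thesis using pos[rule_format, of b] Pair by simp
  qed
  define G where "G = dderivs us F"
  have "continuous_on (cball 0 R) G"
    unfolding G_def by (intro continuous_at_imp_continuous_on ballI differentiable_imp_continuous_within smooth_diff[OF sF atF])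
  then have "compact (G ` cball 0 R)" by (intro compact_continuous_image) auto
  then obtain B where B: "\<forall>y\<in>G ` cball 0 R. norm y \<le> B" using compact_imp_bounded bounded_iff by metis
  show ?case
  proof (intro exI[of _ "max B 1"] conjI allI)
    fix x \<xi>
    have "norm (dderivs us F (\<sigma> (x, \<xi>))) \<le> B" using B Rb unfolding G_def by blast
    then show "norm (dderivs us F (\<sigma> (x, \<xi>))) \<le> max B 1 * \<Lambda> \<xi> powr (- \<rho> * real 0)"
      using pos by (simp add: less_imp_neq[symmetric])
  qed simp
next
  case (atS \<beta> \<alpha>)
  then show ?case using sym unfolding symbol_class_def by simp
next
  case (re m h)
  then obtain C where "C > 0" "\<forall>x \<xi>. norm (h (x, \<xi>)) \<le> C * \<Lambda> \<xi> powr (- \<rho> * real m)" by blast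
  then show ?case using abs_Re_le_cmod order_trans by (intro exI[of _ C]) (simp, blast)
next
  case (im m h)
  then obtain C where "C > 0" "\<forall>x \<xi>. norm (h (x, \<xi>)) \<le> C * \<Lambda> \<xi> powr (- \<rho> * real m)" by blast
  then show ?case using abs_Im_le_cmod order_trans by (intro exI[of _ C]) (simp, blast)
next
  case (mul m1 h1 m2 h2)
  obtain C1 where C1: "C1 > 0" "\<forall>x \<xi>. norm (h1 (x, \<xi>)) \<le> C1 * \<Lambda> \<xi> powr (- \<rho> * real m1)" using mul.IH(1) by blast
  obtain C2 where C2: "C2 > 0" "\<forall>x \<xi>. norm (h2 (x, \<xi>)) \<le> C2 * \<Lambda> \<xi> powr (- \<rho> * real m2)" using mul.IH(2) by blast
  show ?case
  proof (intro exI[of _ "C1 * C2"] conjI allI)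
    fix x \<xi>
    have "norm (h1 (x, \<xi>) * h2 (x, \<xi>)) = norm (h1 (x, \<xi>)) * norm (h2 (x, \<xi>))" by (simp add: norm_mult)
    also have "\<dots> \<le> (C1 * \<Lambda> \<xi> powr (- \<rho> * real m1)) * (C2 * \<Lambda> \<xi> powr (- \<rho> * real m2))"
      using C1 C2 by (intro mult_mono) auto
    also have "\<dots> = (C1 * C2) * \<Lambda> \<xi> powr (- \<rho> * real (m1 + m2))"
      by (simp add: powr_add[symmetric] algebra_simps)
    finally show "norm (h1 (x, \<xi>) * h2 (x, \<xi>)) \<le> (C1 * C2) * \<Lambda> \<xi> powr (- \<rho> * real (m1 + m2))" .
  qed (use C1 C2 in simp)
next
  case (add m h1 h2)
  obtain C1 where C1: "C1 > 0" "\<forall>x \<xi>. norm (h1 (x, \<xi>)) \<le> C1 * \<Lambda> \<xi> powr (- \<rho> * real m)" using add.IH(1) by blast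
  obtain C2 where C2: "C2 > 0" "\<forall>x \<xi>. norm (h2 (x, \<xi>)) \<le> C2 * \<Lambda> \<xi> powr (- \<rho> * real m)" using add.IH(2) by blast
  show ?case
  proof (intro exI[of _ "C1 + C2"] conjI allI)
    fix x \<xi>
    have "norm (h1 (x, \<xi>) + h2 (x, \<xi>)) \<le> norm (h1 (x, \<xi>)) + norm (h2 (x, \<xi>))" by (rule norm_triangle_ineq)
    also have "\<dots> \<le> C1 * \<Lambda> \<xi> powr (- \<rho> * real m) + C2 * \<Lambda> \<xi> powr (- \<rho> * real m)"
      using C1 C2 by (intro add_mono) auto
    finally show "norm (h1 (x, \<xi>) + h2 (x, \<xi>)) \<le> (C1 + C2) * \<Lambda> \<xi> powr (- \<rho> * real m)"
      by (simp add: algebra_simps)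
  qed (use C1 C2 in simp)
qed

lemma incs_lst: "sum_list (map inc (lst \<alpha> \<beta>)) = mabs \<beta>"
proof -
  have "sum_list (map inc (lst \<alpha> \<beta>)) = sum_list (map (\<lambda>_. 0::nat) (multi_list \<alpha>)) + sum_list (map (\<lambda>_. 1::nat) (multi_list \<beta>))"
    unfolding lst_def by (simp add: comp_def inc_def axis_eq_0_iff)
  also have "\<dots> = length (multi_list \<beta>)" by (simp add: sum_list_triv)
  finally show ?thesis by (simp add: length_multi_list)
qed

theorem mainTheorem5:
  fixes \<Lambda> :: "real^'n::finite \<Rightarrow> real" and \<mu> \<rho> :: real
    and \<sigma> :: "(real^'n) \<times> (real^'n) \<Rightarrow> complex" and F :: "complex \<Rightarrow> complex"
  assumes "weight_poly_growth \<Lambda> \<mu>"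
    and "0 < \<rho>" and "\<rho> \<le> 1 / \<mu>"
    and "\<sigma> \<in> symbol_class 0 \<rho> \<Lambda>"
    and "smooth F"
  shows "F \<circ> \<sigma> \<in> symbol_class 0 \<rho> \<Lambda>"
proof -
  have pos: "\<forall>\<xi>. \<Lambda> \<xi> > 0" using assms(1) unfolding weight_poly_growth_def by blast
  have ss: "smooth \<sigma>" using assms(4) unfolding symbol_class_def by blast
  have P0: "PP F \<sigma> 0 (F \<circ> \<sigma>)"
    using PP.atF[of "[]" F \<sigma>] by (simp add: comp_def)
  have sm: "smooth (F \<circ> \<sigma>)"
    unfolding smooth_def using PP_diff[OF assms(5) ss dderivs_PP[OF assms(5) ss P0]] by blast
  have bd: "\<exists>C>0. \<forall>x \<xi>. norm (pd_xxi \<alpha> \<beta> (F \<circ> \<sigma>) (x, \<xi>)) \<le> C * \<Lambda> \<xi> powr (0 - \<rho> * real (mabs \<beta>))"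
    for \<alpha> \<beta>
  proof -
    have "PP F \<sigma> (0 + sum_list (map inc (lst \<alpha> \<beta>))) (dderivs (lst \<alpha> \<beta>) (F \<circ> \<sigma>))"
      by (rule dderivs_PP[OF assms(5) ss P0 lst_basis])
    then have "PP F \<sigma> (mabs \<beta>) (pd_xxi \<alpha> \<beta> (F \<circ> \<sigma>))" by (simp add: incs_lst pd_xxi_lst)
    from bound_PP[OF assms(5) assms(4) pos this] show ?thesis by simp
  qed
  show ?thesis unfolding symbol_class_def using sm bd by blast
qed

end
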